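(* Let $\mathcal C\subseteq\mathbb F_2^n$ be a binary linear code, $\sigma\in S_n$, and $\prec$ an admissible order on $[X]$ with $x_1\prec\dots\prec x_n$. Let $G$ be the reduced basis of $\mathcal C$ (output of Algorithm R for $\mathcal C$ with $<_e$ built from $\prec$). Define the admissible order $\prec^\sigma$ by $u\prec^\sigma v$ iff $\sigma^{-1}(u)\prec\sigma^{-1}(v)$ (so $x_{\sigma(1)}\prec^\sigma\dots\prec^\sigma x_{\sigma(n)}$). Then $\sigma(G)$ is the reduced basis of $\sigma(\mathcal C)$ with respect to the error-vector order built from $\prec^\sigma$, i.e. it is the output $G$ of Algorithm R for $\sigma(\mathcal C)$ and that order.
   Context: Binary setting: $[X]$ is the free commutative monoid on $X=\{x_1,\dots,x_n\}$; $\psi(\prod x_i^{\beta_i})=(\beta_i\bmod 2)_i\in\mathbb F_2^n$; a code of dimension $k$ has a parity check matrix $H$ ($n\times(n-k)$, code $=\{c:cH=0\}$); syndrome $\xi(w)=\psi(w)H$ (with the parity check matrix of the code under consideration). $\mathrm{Ind}(w)=\{i:x_i\mid w\}$. For an admissible order $\prec$, the error-vector order is $u<_e w$ iff $|\mathrm{Ind}(u)|<|\mathrm{Ind}(w)|$, or equality and $u\prec w$. For $\sigma\in S_n$: $\sigma((y_i)_i)=(y_{\sigma^{-1}(i)})_i$, $\sigma(\mathcal C)=\{\sigma(c):c\in\mathcal C\}$, on $[X]$ $\sigma$ is the automorphism $x_i\mapsto x_{\sigma(i)}$, and on a set of binomials it acts termwise. Algorithm R (for a code and an error-vector order $<_e$):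 keep a list $L$ sorted increasingly by $<_e$, a set $N$ and a set $G$ of binomials; initially $L=(1)$, $N=G=\emptyset$. While $L\ne\emptyset$: remove the $<_e$-smallest $w$; if $w$ is divisible by the leading word of some binomial in $G$, discard it; otherwise, if some $w'\in N$ has $\xi(w')=\xi(w)$, add $w-w'$ to $G$ (leading word $w$); else add $w$ to $N$ and insert all $wx$ ($x\in X$) into $L$. Output $(N,G)$; $G$ is the reduced basis. *)

theory Defs
  imports "HOL-Combinatorics.Permutations"
begin

section \<open>Monomials of [X], X = {x_0,...,x_(n-1)} (0-based indices)\<close>

type_synonym mono = "nat \<Rightarrow> nat"
type_synonym vec = "nat \<Rightarrow> bool"    \<comment> \<open>vector in F_2^n (True = 1)\<close>

definition monomials :: "nat \<Rightarrow> mono set" where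
  "monomials n = {m. \<forall>i. n \<le> i \<longrightarrow> m i = 0}"

definition one_mono :: mono where "one_mono = (\<lambda>_. 0)"

definition var :: "nat \<Rightarrow> mono" where "var i = (\<lambda>j. if j = i then 1 else 0)"

definition mmult :: "mono \<Rightarrow> mono \<Rightarrow> mono" where "mmult u v = (\<lambda>i. u i + v i)"

definition mdvd :: "mono \<Rightarrow> mono \<Rightarrow> bool" where "mdvd u w \<longleftrightarrow> (\<forall>i. u i \<le> w i)"

definition Ind :: "mono \<Rightarrow> nat set" where "Ind w = {i. 0 < w i}"

definition admissible :: "nat \<Rightarrow> (mono \<Rightarrow> mono \<Rightarrow> bool) \<Rightarrow> bool" where
  "admissible n ord \<longleftrightarrow>
     (\<forall>u\<in>monomials n. \<not> ord u u) \<and>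
     (\<forall>u\<in>monomials n. \<forall>v\<in>monomials n. \<forall>w\<in>monomials n. ord u v \<longrightarrow> ord v w \<longrightarrow> ord u w) \<and>
     (\<forall>u\<in>monomials n. \<forall>v\<in>monomials n. u \<noteq> v \<longrightarrow> ord u v \<or> ord v u) \<and>
     (\<forall>u\<in>monomials n. u \<noteq> one_mono \<longrightarrow> ord one_mono u) \<and>
     (\<forall>u\<in>monomials n. \<forall>v\<in>monomials n. \<forall>w\<in>monomials n. ord u v \<longrightarrow> ord (mmult u w) (mmult v w))"

definition err_less :: "(mono \<Rightarrow> mono \<Rightarrow> bool) \<Rightarrow> mono \<Rightarrow> mono \<Rightarrow> bool" where
  "err_less ord u w \<longleftrightarrow>
     card (Ind u) < card (Ind w) \<or> (card (Ind u) = card (Ind w) \<and> ord u w)"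

definition vecs :: "nat \<Rightarrow> vec set" where
  "vecs n = {y. \<forall>i. n \<le> i \<longrightarrow> \<not> y i}"

definition vadd :: "vec \<Rightarrow> vec \<Rightarrow> vec" where "vadd a b = (\<lambda>i. a i \<noteq> b i)"

definition binary_linear_code :: "nat \<Rightarrow> vec set \<Rightarrow> bool" where
  "binary_linear_code n C \<longleftrightarrow>
     C \<subseteq> vecs n \<and> (\<lambda>_. False) \<in> C \<and> (\<forall>a\<in>C. \<forall>b\<in>C. vadd a b \<in> C)"

definition psi :: "mono \<Rightarrow> vec" where "psi w = (\<lambda>i. odd (w i))"

text \<open>Equality of syndromes \<open>\<xi>(w) = \<xi>(w')\<close> w.r.t. a parity check matrix H of C:
  since C = {c. cH = 0}, \<open>\<psi>(w)H = \<psi>(w')H\<close> iff \<open>\<psi>(w) + \<psi>(w') \<in> C\<close>.\<close>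
definition same_syndrome :: "vec set \<Rightarrow> mono \<Rightarrow> mono \<Rightarrow> bool" where
  "same_syndrome C w w' \<longleftrightarrow> vadd (psi w) (psi w') \<in> C"

text \<open>State (L, N, G); L is the (duplicate-free) sorted list, represented as a set
  (it is always processed by taking its err_less-smallest element). A binomial
  w - w' with leading word w is represented by the pair (w, w').\<close>
type_synonym stateR = "mono set \<times> mono set \<times> (mono \<times> mono) set"

definition algR_step :: "nat \<Rightarrow> vec set \<Rightarrow> (mono \<Rightarrow> mono \<Rightarrow> bool) \<Rightarrow> stateR \<Rightarrow> stateR \<Rightarrow> bool" where
  "algR_step n C ord s s' \<longleftrightarrow>
     (case s of (L, N, G) \<Rightarrow>
       \<exists>w\<in>L. (\<forall>v\<in>L. v \<noteq> w \<longrightarrow> err_less ord w v) \<and>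
         (if (\<exists>g\<in>G. mdvd (fst g) w) then s' = (L - {w}, N, G)
          else if (\<exists>w'\<in>N. same_syndrome C w' w)
            then (\<exists>w'\<in>N. same_syndrome C w' w \<and> s' = (L - {w}, N, G \<union> {(w, w')}))
          else s' = ((L - {w}) \<union> {mmult w (var i) | i. i < n}, N \<union> {w}, G)))"

definition algR_init :: stateR where "algR_init = ({one_mono}, {}, {})"

definition algR_output :: "nat \<Rightarrow> vec set \<Rightarrow> (mono \<Rightarrow> mono \<Rightarrow> bool)
    \<Rightarrow> mono set \<Rightarrow> (mono \<times> mono) set \<Rightarrow> bool" where
  "algR_output n C ord N G \<longleftrightarrow> (algR_step n C ord)\<^sup>*\<^sup>* algR_init ({}, N, G)"

definition perm_vec :: "(nat \<Rightarrow> nat) \<Rightarrow> vec \<Rightarrow> vec" where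
  "perm_vec \<sigma> y = (\<lambda>i. y (inv \<sigma> i))"

definition perm_code :: "(nat \<Rightarrow> nat) \<Rightarrow> vec set \<Rightarrow> vec set" where
  "perm_code \<sigma> C = perm_vec \<sigma> ` C"

text \<open>Automorphism x_i \<mapsto> x_(\<sigma> i) of [X].\<close>
definition perm_mono :: "(nat \<Rightarrow> nat) \<Rightarrow> mono \<Rightarrow> mono" where
  "perm_mono \<sigma> m = (\<lambda>j. m (inv \<sigma> j))"

definition perm_binomials :: "(nat \<Rightarrow> nat) \<Rightarrow> (mono \<times> mono) set \<Rightarrow> (mono \<times> mono) set" where
  "perm_binomials \<sigma> G = (\<lambda>(u, v). (perm_mono \<sigma> u, perm_mono \<sigma> v)) ` G"

definition perm_order :: "(nat \<Rightarrow> nat) \<Rightarrow> (mono \<Rightarrow> mono \<Rightarrow> bool) \<Rightarrow> mono \<Rightarrow> mono \<Rightarrow> bool" where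
  "perm_order \<sigma> ord u v \<longleftrightarrow> ord (perm_mono (inv \<sigma>) u) (perm_mono (inv \<sigma>) v)"

end

theory Submission
  imports Defs
begin

lemma bij_inv_f[simp]: "bij f \<Longrightarrow> inv f (f x) = x"
  by (simp add: bij_is_inj)

lemma bij_f_inv[simp]: "bij f \<Longrightarrow> f (inv f x) = x"
  by (simp add: bij_is_surj surj_f_inv_f)

lemma pm_inv_pm:
  assumes "bij \<sigma>" shows "perm_mono (inv \<sigma>) (perm_mono \<sigma> u) = u"
  using assms by (simp add: perm_mono_def inv_inv_eq bij_inv_eq_iff fun_eq_iff)

lemma pm_pm_inv:
  assumes "bij \<sigma>" shows "perm_mono \<sigma> (perm_mono (inv \<sigma>) u) = u"
  using assms by (simp add: perm_mono_def inv_inv_eq bij_inv_eq_iff fun_eq_iff)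

lemma pm_inj:
  assumes "bij \<sigma>" shows "inj (perm_mono \<sigma>)"
  by (metis assms injI pm_inv_pm)

lemma pm_eq_iff:
  assumes "bij \<sigma>" shows "perm_mono \<sigma> u = perm_mono \<sigma> v \<longleftrightarrow> u = v"
  using pm_inj[OF assms] by (auto dest: injD)

lemma Ind_pm:
  assumes "bij \<sigma>" shows "Ind (perm_mono \<sigma> u) = \<sigma> ` Ind u"
proof -
  have "Ind (perm_mono \<sigma> u) = {j. 0 < u (inv \<sigma> j)}" by (simp add: Ind_def perm_mono_def)
  also have "\<dots> = \<sigma> ` Ind u"
    using assms unfolding Ind_def
    by (auto simp: image_iff) (metis bij_f_inv)
  finally show ?thesis .
qed

lemma card_Ind_pm:
  assumes "bij \<sigma>" shows "card (Ind (perm_mono \<sigma> u)) = card (Ind u)"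
  using assms by (simp add: Ind_pm card_image inj_on_subset[OF bij_is_inj[OF assms]])

lemma err_less_pm:
  assumes "bij \<sigma>"
  shows "err_less (perm_order \<sigma> ord) (perm_mono \<sigma> u) (perm_mono \<sigma> w) \<longleftrightarrow> err_less ord u w"
  using assms by (simp add: err_less_def card_Ind_pm perm_order_def pm_inv_pm)

lemma mdvd_pm:
  assumes "bij \<sigma>"
  shows "mdvd (perm_mono \<sigma> u) (perm_mono \<sigma> w) \<longleftrightarrow> mdvd u w"
  unfolding mdvd_def perm_mono_def
  by (metis assms bij_inv_eq_iff)

lemma psi_pm: "psi (perm_mono \<sigma> u) = perm_vec \<sigma> (psi u)"
  by (simp add: psi_def perm_mono_def perm_vec_def)

lemma vadd_pv: "vadd (perm_vec \<sigma> a) (perm_vec \<sigma> b) = perm_vec \<sigma> (vadd a b)"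
  by (simp add: vadd_def perm_vec_def)

lemma pv_inj:
  assumes "bij \<sigma>" shows "inj (perm_vec \<sigma>)"
proof (rule injI)
  fix a b assume "perm_vec \<sigma> a = perm_vec \<sigma> b"
  hence "\<And>i. a (inv \<sigma> (\<sigma> i)) = b (inv \<sigma> (\<sigma> i))" unfolding perm_vec_def by metis
  thus "a = b" using assms by (simp add: bij_inv_eq_iff fun_eq_iff)
qed

lemma same_syn_pm:
  assumes "bij \<sigma>"
  shows "same_syndrome (perm_code \<sigma> C) (perm_mono \<sigma> u) (perm_mono \<sigma> w) \<longleftrightarrow> same_syndrome C u w"
  unfolding same_syndrome_def perm_code_def psi_pm vadd_pv
  using inj_image_mem_iff[OF pv_inj[OF assms]] by blast

lemma pm_mmult: "perm_mono \<sigma> (mmult u v) = mmult (perm_mono \<sigma> u) (perm_mono \<sigma> v)"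
  by (simp add: perm_mono_def mmult_def)

lemma pm_var:
  assumes "bij \<sigma>" shows "perm_mono \<sigma> (var j) = var (\<sigma> j)"
  using assms by (auto simp: perm_mono_def var_def fun_eq_iff bij_inv_eq_iff)

lemma pm_one: "perm_mono \<sigma> one_mono = one_mono"
  by (simp add: perm_mono_def one_mono_def)

lemma succ_pm:
  assumes "\<sigma> permutes {..<n}"
  shows "{mmult (perm_mono \<sigma> w) (var i) | i. i < n} = perm_mono \<sigma> ` {mmult w (var i) | i. i < n}"
proof -
  have b: "bij \<sigma>" using assms permutes_bij by blast
  have "{mmult (perm_mono \<sigma> w) (var i) | i. i < n} = (\<lambda>i. mmult (perm_mono \<sigma> w) (var i)) ` {..<n}" by auto
  also have "\<dots> = (\<lambda>i. mmult (perm_mono \<sigma> w) (var i)) ` (\<sigma> ` {..<n})"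
    using permutes_image[OF assms] by simp
  also have "\<dots> = perm_mono \<sigma> ` ((\<lambda>i. mmult w (var i)) ` {..<n})"
    by (simp add: image_image pm_mmult pm_var[OF b])
  also have "\<dots> = perm_mono \<sigma> ` {mmult w (var i) | i. i < n}" by (auto simp: image_iff)
  finally show ?thesis .
qed

definition PhiS :: "(nat \<Rightarrow> nat) \<Rightarrow> stateR \<Rightarrow> stateR" where
  "PhiS \<sigma> s = (case s of (L, N, G) \<Rightarrow> (perm_mono \<sigma> ` L, perm_mono \<sigma> ` N, perm_binomials \<sigma> G))"

lemma step_pm:
  assumes p: "\<sigma> permutes {..<n}" and st: "algR_step n C ord s s'"
  shows "algR_step n (perm_code \<sigma> C) (perm_order \<sigma> ord) (PhiS \<sigma> s) (PhiS \<sigma> s')"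
proof -
  have b: "bij \<sigma>" using p permutes_bij by blast
  note inj = pm_inj[OF b]
  obtain L N G where s: "s = (L, N, G)" by (cases s) auto
  from st obtain w where wL: "w \<in> L" and wmin: "\<forall>v\<in>L. v \<noteq> w \<longrightarrow> err_less ord w v"
    and br: "(if (\<exists>g\<in>G. mdvd (fst g) w) then s' = (L - {w}, N, G)
          else if (\<exists>w'\<in>N. same_syndrome C w' w)
            then (\<exists>w'\<in>N. same_syndrome C w' w \<and> s' = (L - {w}, N, G \<union> {(w, w')}))
          else s' = ((L - {w}) \<union> {mmult w (var i) | i. i < n}, N \<union> {w}, G))"
    unfolding algR_step_def s by auto
  let ?p = "perm_mono \<sigma>"
  have diff: "?p ` (L - {w}) = ?p ` L - {?p w}" using inj by (simp add: image_set_diff)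
  have c1: "(\<exists>g\<in>perm_binomials \<sigma> G. mdvd (fst g) (?p w)) \<longleftrightarrow> (\<exists>g\<in>G. mdvd (fst g) w)"
  proof
    assume "\<exists>g\<in>perm_binomials \<sigma> G. mdvd (fst g) (?p w)"
    then obtain a c where "(a, c) \<in> G" "mdvd (?p a) (?p w)" unfolding perm_binomials_def by auto
    thus "\<exists>g\<in>G. mdvd (fst g) w" using mdvd_pm[OF b] by force
  next
    assume "\<exists>g\<in>G. mdvd (fst g) w"
    then obtain a c where "(a, c) \<in> G" "mdvd a w" by auto
    hence "(?p a, ?p c) \<in> perm_binomials \<sigma> G" "mdvd (?p a) (?p w)"
      unfolding perm_binomials_def using mdvd_pm[OF b] by force+
    thus "\<exists>g\<in>perm_binomials \<sigma> G. mdvd (fst g) (?p w)" by force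
  qed
  have c2: "(\<exists>w'\<in>?p ` N. same_syndrome (perm_code \<sigma> C) w' (?p w)) \<longleftrightarrow> (\<exists>w'\<in>N. same_syndrome C w' w)"
    using same_syn_pm[OF b] by auto
  have min': "\<forall>v\<in>?p ` L. v \<noteq> ?p w \<longrightarrow> err_less (perm_order \<sigma> ord) (?p w) v"
    using wmin err_less_pm[OF b] by auto
  have pb: "perm_binomials \<sigma> (insert (w, w') G) = insert (?p w, ?p w') (perm_binomials \<sigma> G)" for w'
    by (simp add: perm_binomials_def)
  have goal: "(if (\<exists>g\<in>perm_binomials \<sigma> G. mdvd (fst g) (?p w)) then PhiS \<sigma> s' = (?p ` L - {?p w}, ?p ` N, perm_binomials \<sigma> G)
          else if (\<exists>w'\<in>?p ` N. same_syndrome (perm_code \<sigma> C) w' (?p w))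
            then (\<exists>w'\<in>?p ` N. same_syndrome (perm_code \<sigma> C) w' (?p w) \<and> PhiS \<sigma> s' = (?p ` L - {?p w}, ?p ` N, perm_binomials \<sigma> G \<union> {(?p w, w')}))
          else PhiS \<sigma> s' = ((?p ` L - {?p w}) \<union> {mmult (?p w) (var i) | i. i < n}, ?p ` N \<union> {?p w}, perm_binomials \<sigma> G))"
  proof (cases "\<exists>g\<in>G. mdvd (fst g) w")
    case True
    then show ?thesis using br c1 by (simp add: PhiS_def diff)
  next
    case F1: False
    show ?thesis
    proof (cases "\<exists>w'\<in>N. same_syndrome C w' w")
      case True
      with br F1 obtain w' where "w' \<in> N" "same_syndrome C w' w" "s' = (L - {w}, N, G \<union> {(w, w')})"
        by auto
      moreover have "same_syndrome (perm_code \<sigma> C) (?p w') (?p w)" using same_syn_pm[OF b] calculation by blast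
      ultimately show ?thesis using F1 c1 c2 True
        by (simp add: PhiS_def diff pb) (metis Un_insert_right sup_bot_right)
    next
      case False
      then show ?thesis using br F1 c1 c2 by (simp add: PhiS_def diff succ_pm[OF p] image_Un)
    qed
  qed
  show ?thesis
    unfolding algR_step_def s
    apply (simp only: PhiS_def prod.case)
    apply (rule bexI[of _ "?p w"])
     apply (rule conjI[OF min'])
    using goal unfolding s PhiS_def apply simp
    using wL by simp
qed

lemma steps_pm:
  assumes p: "\<sigma> permutes {..<n}" and st: "(algR_step n C ord)\<^sup>*\<^sup>* s s'"
  shows "(algR_step n (perm_code \<sigma> C) (perm_order \<sigma> ord))\<^sup>*\<^sup>* (PhiS \<sigma> s) (PhiS \<sigma> s')"
  using st
proof (induction rule: rtranclp_induct)
  case base then show ?case by simp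
next
  case (step y z) then show ?case using step_pm[OF p] by (meson rtranclp.simps)
qed

lemma pm_monomials:
  assumes "\<sigma> permutes {..<n}" "m \<in> monomials n"
  shows "perm_mono (inv \<sigma>) m \<in> monomials n"
proof -
  have b: "bij \<sigma>" using assms permutes_bij by blast
  have "perm_mono (inv \<sigma>) m = (\<lambda>j. m (\<sigma> j))" by (simp add: perm_mono_def inv_inv_eq[OF b])
  moreover have "\<sigma> j = j" if "n \<le> j" for j using assms(1) that by (simp add: permutes_not_in)
  ultimately show ?thesis using assms(2) by (simp add: monomials_def)
qed

theorem theorem4p1:
  fixes n :: nat and C :: "vec set" and \<sigma> :: "nat \<Rightarrow> nat"
    and ord :: "mono \<Rightarrow> mono \<Rightarrow> bool"
    and N :: "mono set" and G :: "(mono \<times> mono) set"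
  assumes "binary_linear_code n C"
    and "\<sigma> permutes {..<n}"
    and "admissible n ord"
    and "\<forall>i j. i < j \<and> j < n \<longrightarrow> ord (var i) (var j)"
    and "algR_output n C ord N G"
  shows "admissible n (perm_order \<sigma> ord)
    \<and> (\<exists>N'. algR_output n (perm_code \<sigma> C) (perm_order \<sigma> ord) N' (perm_binomials \<sigma> G))"
proof
  have b: "bij \<sigma>" using assms(2) permutes_bij by blast
  have bi: "bij (inv \<sigma>)" using b bij_imp_bij_inv by blast
  let ?q = "perm_mono (inv \<sigma>)"
  have M: "\<And>m. m \<in> monomials n \<Longrightarrow> ?q m \<in> monomials n" using pm_monomials[OF assms(2)] .
  have E: "\<And>u v. ?q u = ?q v \<longleftrightarrow> u = v" using pm_eq_iff[OF bi] .
  have O: "?q one_mono = one_mono" by (rule pm_one)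
  have MM: "\<And>u v. ?q (mmult u v) = mmult (?q u) (?q v)" by (rule pm_mmult)
  note A = assms(3)[unfolded admissible_def]
  show "admissible n (perm_order \<sigma> ord)"
    unfolding admissible_def perm_order_def
  proof (intro conjI ballI impI)
    fix u assume "u \<in> monomials n" thus "\<not> ord (?q u) (?q u)" using A M by blast
  next
    fix u v w assume "u \<in> monomials n" "v \<in> monomials n" "w \<in> monomials n"
      "ord (?q u) (?q v)" "ord (?q v) (?q w)"
    thus "ord (?q u) (?q w)" using A M by blast
  next
    fix u v assume "u \<in> monomials n" "v \<in> monomials n" "u \<noteq> v"
    thus "ord (?q u) (?q v) \<or> ord (?q v) (?q u)" using A M E by blast
  next
    fix u assume "u \<in> monomials n" "u \<noteq> one_mono"
    hence "?q u \<noteq> ?q one_mono" using E by blast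
    thus "ord (?q one_mono) (?q u)" using A M O \<open>u \<in> monomials n\<close> by auto
  next
    fix u v w assume "u \<in> monomials n" "v \<in> monomials n" "w \<in> monomials n"
      "ord (?q u) (?q v)"
    thus "ord (?q (mmult u w)) (?q (mmult v w))" unfolding MM using A M by blast
  qed
next
  have "PhiS \<sigma> algR_init = algR_init" by (simp add: PhiS_def algR_init_def pm_one perm_binomials_def)
  then show "\<exists>N'. algR_output n (perm_code \<sigma> C) (perm_order \<sigma> ord) N' (perm_binomials \<sigma> G)"
    using steps_pm[OF assms(2) assms(5)[unfolded algR_output_def]]
    unfolding algR_output_def PhiS_def by auto
qed

end
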